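(* With $\mathsf{S}_-(\mathsf{H},\zeta)$ and $\mathsf{S}_+(\mathsf{H},\zeta)$ the odd and even Hopf subalgebras, one has: (1) $\mathrm{S}(\mathrm{O}(V))\subseteq\mathsf{S}_-(\mathrm{S}(V),\zeta_{\mathrm{S}(V)})$ and $\mathrm{S}(\mathrm{E}(V))\subseteq\mathsf{S}_+(\mathrm{S}(V),\zeta_{\mathrm{S}(V)})$; (2) $\mathrm{T}(\mathrm{O}(V))\subseteq\mathsf{S}_-(\mathrm{T}(V),\zeta_{\mathrm{T}(V)})$ and $\mathrm{T}(\mathrm{E}(V))\subseteq\mathsf{S}_+(\mathrm{T}(V),\zeta_{\mathrm{T}(V)})$; (3) $\mathrm{Sym}(\mathrm{O}(V))\subseteq\mathsf{S}_-(\mathrm{Sym}(V),\zeta_{\mathrm{Sym}(V)})$ and $\mathrm{Sym}(\mathrm{E}(V))\subseteq\mathsf{S}_+(\mathrm{Sym}(V),\zeta_{\mathrm{Sym}(V)})$.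
   Context: For a combinatorial Hopf algebra $(\mathsf{H},\zeta)$ ($\mathsf{H}$ graded connected, $\zeta$ a character), $\bar\zeta|_{\mathsf{H}_n}=(-1)^n\zeta|_{\mathsf{H}_n}$, $\zeta^{-1}=\zeta\circ\mathcal{S}$, and $\mathsf{S}_-(\mathsf{H},\zeta)$ (resp. $\mathsf{S}_+$) is the largest subcoalgebra in $\ker(\overline{\zeta^{-1}}-\zeta)$ (resp. $\ker(\bar\zeta-\zeta)$). $V$ is a graded vector space with homogeneous basis $\{v_i\}$. $\mathrm{S}(V)$ is the shuffle algebra on words $v_\alpha$ (product: sum over all shuffles of the two words, i.e. interleavings preserving order within each; coproduct: deconcatenation), with character $\zeta_{\mathrm{S}(V)}=\zeta_{\mathrm{QSym}}\circ\Phi_{\mathrm{S}(V)}$ where $\Phi_{\mathrm{S}(V)}(v_\alpha)=S_{(\deg v_{\alpha_1},\dots,\deg v_{\alpha_\ell})}$ (shuffle basis of $\mathrm{QSym}$) and $\zeta_{\mathrm{QSym}}(f)=f(1,0,0,\dots)$. $\mathrm{T}(V)$ is the tensor algebra (concatenation product, $v_i$ primitive) with character $\zeta_{\mathrm{T}(V)}(v_i)=1/\deg(v_i)$ extended multiplicatively; $\mathrm{Sym}(V)=\mathrm{T}(V)/\langle v_iv_j-v_jv_i\rangle$ with induced character $\zeta_{\mathrm{Sym}(V)}(\overline{v_i})=1/\deg(v_i)$. $\mathrm{S}(\mathrm{O}(V))$, $\mathrm{T}(\mathrm{O}(V))$, $\mathrm{Sym}(\mathrm{O}(V))$ (resp.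 with $\mathrm{E}$) are spanned by the words (classes) all of whose letters have odd (resp. even) degree. *)

theory Defs
  imports Main "HOL-Library.Multiset"
begin

text \<open>A vector space with basis indexed by type 'b over a field 'k is modelled as the
finitely supported functions 'b => 'k (coefficients w.r.t. the basis).\<close>

definition fsupp :: "('b \<Rightarrow> 'k::zero) \<Rightarrow> 'b set" where
  "fsupp f = {b. f b \<noteq> 0}"

definition vecs :: "('b \<Rightarrow> 'k::zero) set" where
  "vecs = {f. finite (fsupp f)}"

definition lin_span :: "('b \<Rightarrow> 'k::field) set \<Rightarrow> ('b \<Rightarrow> 'k) set" where
  "lin_span A = {f. \<exists>F c. finite F \<and> F \<subseteq> A \<and> f = (\<lambda>b. \<Sum>g\<in>F. c g * g b)}"

definition subspace_of :: "('b \<Rightarrow> 'k::field) set \<Rightarrow> bool" where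
  "subspace_of C \<longleftrightarrow> C \<subseteq> vecs \<and> (\<lambda>_. 0) \<in> C
     \<and> (\<forall>f\<in>C. \<forall>g\<in>C. (\<lambda>b. f b + g b) \<in> C)
     \<and> (\<forall>a. \<forall>f\<in>C. (\<lambda>b. a * f b) \<in> C)"

definition tens :: "('b \<Rightarrow> 'k::field) \<Rightarrow> ('b \<Rightarrow> 'k) \<Rightarrow> ('b \<times> 'b \<Rightarrow> 'k)" where
  "tens f g = (\<lambda>(x, y). f x * g y)"

definition tensor_sq :: "('b \<Rightarrow> 'k::field) set \<Rightarrow> ('b \<times> 'b \<Rightarrow> 'k) set" where
  "tensor_sq C = lin_span {tens f g | f g. f \<in> C \<and> g \<in> C}"

text \<open>A coproduct is given by Delta b = the element of H (x) H (coefficients on pairs of basis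
elements), extended linearly.\<close>

definition coprod :: "('b \<Rightarrow> ('b \<times> 'b \<Rightarrow> 'k::field)) \<Rightarrow> ('b \<Rightarrow> 'k) \<Rightarrow> ('b \<times> 'b \<Rightarrow> 'k)" where
  "coprod Delta f = (\<lambda>p. \<Sum>b\<in>fsupp f. f b * Delta b p)"

definition subcoalgebra :: "('b \<Rightarrow> ('b \<times> 'b \<Rightarrow> 'k::field)) \<Rightarrow> ('b \<Rightarrow> 'k) set \<Rightarrow> bool" where
  "subcoalgebra Delta C \<longleftrightarrow> subspace_of C \<and> (\<forall>f\<in>C. coprod Delta f \<in> tensor_sq C)"

text \<open>Linear functionals are given by their values on the basis.\<close>
definition apply_fun :: "('b \<Rightarrow> 'k::field) \<Rightarrow> ('b \<Rightarrow> 'k) \<Rightarrow> 'k" where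
  "apply_fun phi f = (\<Sum>b\<in>fsupp f. f b * phi b)"

definition ker_fun :: "('b \<Rightarrow> 'k::field) \<Rightarrow> ('b \<Rightarrow> 'k) set" where
  "ker_fun phi = {f \<in> vecs. apply_fun phi f = 0}"

definition largest_subcoalg :: "('b \<Rightarrow> ('b \<times> 'b \<Rightarrow> 'k::field)) \<Rightarrow> ('b \<Rightarrow> 'k) set \<Rightarrow> ('b \<Rightarrow> 'k) set" where
  "largest_subcoalg Delta K = lin_span (\<Union>{C. subcoalgebra Delta C \<and> C \<subseteq> K})"

definition conv :: "('b \<Rightarrow> ('b \<times> 'b \<Rightarrow> 'k::field)) \<Rightarrow> ('b \<Rightarrow> 'k) \<Rightarrow> ('b \<Rightarrow> 'k) \<Rightarrow> ('b \<Rightarrow> 'k)" where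
  "conv Delta phi psi = (\<lambda>b. \<Sum>p\<in>fsupp (Delta b). Delta b p * phi (fst p) * psi (snd p))"

text \<open>Inverse of a character in the convolution algebra (equals zeta o antipode).\<close>
definition conv_inv :: "('b \<Rightarrow> ('b \<times> 'b \<Rightarrow> 'k::field)) \<Rightarrow> ('b \<Rightarrow> 'k) \<Rightarrow> ('b \<Rightarrow> 'k) \<Rightarrow> ('b \<Rightarrow> 'k)" where
  "conv_inv Delta eps zeta = (THE psi. conv Delta zeta psi = eps \<and> conv Delta psi zeta = eps)"

definition bar :: "('b \<Rightarrow> nat) \<Rightarrow> ('b \<Rightarrow> 'k::field) \<Rightarrow> ('b \<Rightarrow> 'k)" where
  "bar dg phi = (\<lambda>b. (-1) ^ dg b * phi b)"

definition S_minus :: "('b \<Rightarrow> ('b \<times> 'b \<Rightarrow> 'k::field)) \<Rightarrow> ('b \<Rightarrow> 'k) \<Rightarrow> ('b \<Rightarrow> nat) \<Rightarrow> ('b \<Rightarrow> 'k) \<Rightarrow> ('b \<Rightarrow> 'k) set" where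
  "S_minus Delta eps dg zeta =
     largest_subcoalg Delta (ker_fun (\<lambda>b. bar dg (conv_inv Delta eps zeta) b - zeta b))"

definition S_plus :: "('b \<Rightarrow> ('b \<times> 'b \<Rightarrow> 'k::field)) \<Rightarrow> ('b \<Rightarrow> nat) \<Rightarrow> ('b \<Rightarrow> 'k) \<Rightarrow> ('b \<Rightarrow> 'k) set" where
  "S_plus Delta dg zeta = largest_subcoalg Delta (ker_fun (\<lambda>b. bar dg zeta b - zeta b))"

definition word_deg :: "('i \<Rightarrow> nat) \<Rightarrow> 'i list \<Rightarrow> nat" where
  "word_deg deg w = sum_list (map deg w)"

definition mset_deg :: "('i \<Rightarrow> nat) \<Rightarrow> 'i multiset \<Rightarrow> nat" where
  "mset_deg deg m = sum_mset (image_mset deg m)"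

definition eps_word :: "'i list \<Rightarrow> 'k::field" where
  "eps_word w = (if w = [] then 1 else 0)"

definition eps_mset :: "'i multiset \<Rightarrow> 'k::field" where
  "eps_mset m = (if m = {#} then 1 else 0)"

text \<open>Deconcatenation coproduct (shuffle algebra S(V)).\<close>
definition deconc :: "'i list \<Rightarrow> ('i list \<times> 'i list \<Rightarrow> 'k::field)" where
  "deconc w = (\<lambda>(x, y). if x @ y = w then 1 else 0)"

text \<open>Unshuffle coproduct (tensor algebra T(V), letters primitive).\<close>
definition unshuffle :: "'i list \<Rightarrow> ('i list \<times> 'i list \<Rightarrow> 'k::field)" where
  "unshuffle w = (\<lambda>(x, y). of_nat (card {I. I \<subseteq> {..<length w} \<and> nths w I = x
                                        \<and> nths w ({..<length w} - I) = y}))"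

text \<open>Coproduct of Sym(V) on monomials (multisets of basis letters).\<close>
definition sym_coprod :: "'i multiset \<Rightarrow> ('i multiset \<times> 'i multiset \<Rightarrow> 'k::field)" where
  "sym_coprod m = (\<lambda>(a, b). if a + b = m
       then (\<Prod>i\<in>set_mset m. of_nat (count m i choose count a i)) else 0)"

definition zeta_T :: "('i \<Rightarrow> nat) \<Rightarrow> 'i list \<Rightarrow> 'k::field" where
  "zeta_T deg w = prod_list (map (\<lambda>i. 1 / of_nat (deg i)) w)"

definition zeta_Sym :: "('i \<Rightarrow> nat) \<Rightarrow> 'i multiset \<Rightarrow> 'k::field" where
  "zeta_Sym deg m = prod_mset (image_mset (\<lambda>i. 1 / of_nat (deg i)) m)"

text \<open>QSym elements are given by coefficients in the monomial basis M_alpha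
(alpha a composition, i.e. a list of positive naturals).  M_alpha evaluated at a point x
whose coordinates x_i vanish for i >= N.\<close>
definition M_eval :: "nat \<Rightarrow> (nat \<Rightarrow> 'k::field) \<Rightarrow> nat list \<Rightarrow> 'k" where
  "M_eval N x alpha = (\<Sum>is\<in>{is. sorted_wrt (<) is \<and> length is = length alpha \<and> set is \<subseteq> {..<N}}.
       \<Prod>j<length alpha. x (is ! j) ^ (alpha ! j))"

definition qsym_eval :: "nat \<Rightarrow> (nat \<Rightarrow> 'k::field) \<Rightarrow> (nat list \<Rightarrow> 'k) \<Rightarrow> 'k" where
  "qsym_eval N x f = (\<Sum>alpha\<in>fsupp f. f alpha * M_eval N x alpha)"

definition zeta_QSym :: "(nat list \<Rightarrow> 'k::field) \<Rightarrow> 'k" where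
  "zeta_QSym f = qsym_eval 1 (\<lambda>i. if i = 0 then 1 else 0) f"

text \<open>Shuffle basis S_alpha of QSym (Hoffman's exponential of M_alpha), in the M basis:
S_alpha = sum over decompositions of alpha into consecutive nonempty blocks
alpha = alpha^1 ... alpha^k of M_(|alpha^1|,...,|alpha^k|) / (l(alpha^1)! ... l(alpha^k)!).\<close>
definition shuffle_basis :: "nat list \<Rightarrow> (nat list \<Rightarrow> 'k::field)" where
  "shuffle_basis alpha = (\<lambda>beta.
     \<Sum>bs\<in>{bs. concat bs = alpha \<and> [] \<notin> set bs \<and> map sum_list bs = beta}.
        1 / of_nat (prod_list (map (\<lambda>b. fact (length b)) bs)))"

definition Phi_S :: "('i \<Rightarrow> nat) \<Rightarrow> 'i list \<Rightarrow> (nat list \<Rightarrow> 'k::field)" where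
  "Phi_S deg w = shuffle_basis (map deg w)"

definition zeta_S :: "('i \<Rightarrow> nat) \<Rightarrow> 'i list \<Rightarrow> 'k::field" where
  "zeta_S deg w = zeta_QSym (Phi_S deg w)"

definition O_words :: "('i \<Rightarrow> nat) \<Rightarrow> ('i list \<Rightarrow> 'k::field) set" where
  "O_words deg = {f \<in> vecs. \<forall>w\<in>fsupp f. \<forall>i\<in>set w. odd (deg i)}"

definition E_words :: "('i \<Rightarrow> nat) \<Rightarrow> ('i list \<Rightarrow> 'k::field) set" where
  "E_words deg = {f \<in> vecs. \<forall>w\<in>fsupp f. \<forall>i\<in>set w. even (deg i)}"

definition O_msets :: "('i \<Rightarrow> nat) \<Rightarrow> ('i multiset \<Rightarrow> 'k::field) set" where
  "O_msets deg = {f \<in> vecs. \<forall>m\<in>fsupp f. \<forall>i\<in>set_mset m. odd (deg i)}"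

definition E_msets :: "('i \<Rightarrow> nat) \<Rightarrow> ('i multiset \<Rightarrow> 'k::field) set" where
  "E_msets deg = {f \<in> vecs. \<forall>m\<in>fsupp f. \<forall>i\<in>set_mset m. even (deg i)}"

end

theory Submission
  imports Defs "HOL-Library.FuncSet"
begin

definition dl :: "'b \<Rightarrow> 'b \<Rightarrow> 'k::field" where "dl x = (\<lambda>z. if z = x then 1 else 0)"

lemma basis_subcoalg:
  fixes Delta :: "'b \<Rightarrow> ('b \<times> 'b \<Rightarrow> 'k::field)"
  assumes fin: "\<And>b. b \<in> B \<Longrightarrow> finite (fsupp (Delta b))"
  and cl: "\<And>b p. b \<in> B \<Longrightarrow> p \<in> fsupp (Delta b) \<Longrightarrow> fst p \<in> B \<and> snd p \<in> B"
  shows "subcoalgebra Delta {f \<in> vecs. fsupp f \<subseteq> B}"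
  unfolding subcoalgebra_def
proof (intro conjI ballI)
  let ?X = "{f \<in> vecs. fsupp f \<subseteq> B} :: ('b \<Rightarrow> 'k) set"
  have a1: "(\<lambda>b. f b + g b) \<in> ?X" if f: "f \<in> ?X" and g: "g \<in> ?X" for f g :: "'b \<Rightarrow> 'k"
  proof -
    have "fsupp (\<lambda>b. f b + g b) \<subseteq> fsupp f \<union> fsupp g" by (auto simp: fsupp_def)
    moreover have "finite (fsupp f \<union> fsupp g)" using f g by (simp add: vecs_def)
    ultimately have "finite (fsupp (\<lambda>b. f b + g b))" by (rule finite_subset)
    then show ?thesis using f g \<open>fsupp (\<lambda>b. f b + g b) \<subseteq> fsupp f \<union> fsupp g\<close> by (simp add: vecs_def) blast
  qed
  have a2: "(\<lambda>b. a * f b) \<in> ?X" if f: "f \<in> ?X" for a and f :: "'b \<Rightarrow> 'k"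
  proof -
    have "fsupp (\<lambda>b. a * f b) \<subseteq> fsupp f" by (auto simp: fsupp_def)
    moreover have "finite (fsupp f)" using f by (simp add: vecs_def)
    ultimately have "finite (fsupp (\<lambda>b. a * f b))" by (rule finite_subset)
    then show ?thesis using f \<open>fsupp (\<lambda>b. a * f b) \<subseteq> fsupp f\<close> by (simp add: vecs_def) blast
  qed
  have a0: "(\<lambda>_. 0) \<in> ?X" by (simp add: vecs_def fsupp_def)
  show "subspace_of ?X"
    unfolding subspace_of_def
  proof (intro conjI ballI allI a0)
    show "?X \<subseteq> vecs" by blast
  qed (rule a1, assumption, assumption, rule a2, assumption)
next
  let ?X = "{f \<in> vecs. fsupp f \<subseteq> B} :: ('b \<Rightarrow> 'k) set"
  fix f assume f: "f \<in> ?X"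
  define P where "P = (\<Union>b\<in>fsupp f. fsupp (Delta b))"
  define C where "C = coprod Delta f"
  define t :: "'b \<times> 'b \<Rightarrow> 'b \<times> 'b \<Rightarrow> 'k" where "t q = tens (dl (fst q)) (dl (snd q))" for q
  have tq: "t q p = (if p = q then 1 else 0)" for q p
    by (cases p; cases q) (auto simp: t_def tens_def dl_def)
  have finP: "finite P" using f fin unfolding P_def by (auto simp: vecs_def)
  have PB: "fst q \<in> B \<and> snd q \<in> B" if "q \<in> P" for q
  proof -
    from that obtain b where b: "b \<in> fsupp f" "q \<in> fsupp (Delta b)" unfolding P_def by blast
    then have "b \<in> B" using f by blast
    then show ?thesis using cl[OF _ b(2)] by blast
  qed
  have C0: "C p = 0" if "p \<notin> P" for p
    using that unfolding C_def coprod_def P_def by (auto simp: fsupp_def intro!: sum.neutral)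
  have inj: "inj_on t P"
  proof (rule inj_onI)
    fix x y assume "t x = t y"
    then have "t x x = t y x" by simp
    then show "x = y" by (simp add: tq split: if_splits)
  qed
  define c where "c g = C (inv_into P t g)" for g
  have dlX: "dl x \<in> ?X" if "x \<in> B" for x :: 'b
  proof -
    have "fsupp (dl x :: 'b \<Rightarrow> 'k) = {x}" by (auto simp: fsupp_def dl_def)
    then show ?thesis using that by (auto simp: vecs_def)
  qed
  have "C = (\<lambda>p. \<Sum>g\<in>t ` P. c g * g p)"
  proof
    fix p
    have "(\<Sum>g\<in>t ` P. c g * g p) = (\<Sum>q\<in>P. c (t q) * t q p)"
      by (subst sum.reindex[OF inj]) simp
    also have "\<dots> = (\<Sum>q\<in>P. C q * (if p = q then 1 else 0))"
      by (intro sum.cong refl) (simp add: c_def inv_into_f_f[OF inj] tq)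
    also have "\<dots> = (if p \<in> P then C p else 0)"
    proof -
      have "(\<lambda>q. C q * (if p = q then 1 else 0)) = (\<lambda>q. if p = q then C q else 0)" by auto
      then show ?thesis by (simp only:) (rule sum.delta'[OF finP])
    qed
    also have "\<dots> = C p" using C0 by auto
    finally show "C p = (\<Sum>g\<in>t ` P. c g * g p)" by simp
  qed
  moreover have "t ` P \<subseteq> {tens f g | f g. f \<in> ?X \<and> g \<in> ?X}"
  proof
    fix g assume "g \<in> t ` P"
    then obtain q where q: "q \<in> P" "g = t q" by blast
    then show "g \<in> {tens f g | f g. f \<in> ?X \<and> g \<in> ?X}"
      using PB[OF q(1)] dlX unfolding t_def by auto
  qed
  ultimately show "coprod Delta f \<in> tensor_sq ?X"
    unfolding tensor_sq_def lin_span_def C_def using finP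
    by (intro CollectI exI[of _ "t ` P"] exI[of _ c]) simp
qed

lemma in_largest:
  assumes "subcoalgebra Delta X" "X \<subseteq> K" shows "X \<subseteq> largest_subcoalg Delta K"
proof
  fix f assume "f \<in> X"
  then have "f \<in> \<Union>{C. subcoalgebra Delta C \<and> C \<subseteq> K}" using assms by blast
  then show "f \<in> largest_subcoalg Delta K"
    unfolding largest_subcoalg_def lin_span_def
    by (intro CollectI exI[of _ "{f}"] exI[of _ "\<lambda>_. 1"]) auto
qed

lemma in_ker:
  assumes "\<And>b. b \<in> B \<Longrightarrow> phi b = 0" shows "{f \<in> vecs. fsupp f \<subseteq> B} \<subseteq> ker_fun phi"
  using assms unfolding ker_fun_def apply_fun_def by (auto intro!: sum.neutral)

lemma conv_inv_eq:
  fixes Delta :: "'b \<Rightarrow> ('b \<times> 'b \<Rightarrow> 'k::field)" and sz :: "'b \<Rightarrow> nat"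
  assumes fin: "\<And>b. finite (fsupp (Delta b))"
  and e: "\<And>b. Delta b (e, b) = 1" and ze: "zeta e = 1"
  and sm: "\<And>b p. p \<in> fsupp (Delta b) \<Longrightarrow> p \<noteq> (e,b) \<Longrightarrow> sz (snd p) < sz b"
  and r: "conv Delta zeta psi = eps" and l: "conv Delta psi zeta = eps"
  shows "conv_inv Delta eps zeta = psi"
  unfolding conv_inv_def
proof (rule the_equality)
  show "conv Delta zeta psi = eps \<and> conv Delta psi zeta = eps" using r l by simp
next
  fix psi' assume "conv Delta zeta psi' = eps \<and> conv Delta psi' zeta = eps"
  then have eq: "conv Delta zeta psi' = conv Delta zeta psi" using r by simp
  have split: "conv Delta zeta g b = g b + (\<Sum>p\<in>fsupp (Delta b) - {(e,b)}. Delta b p * zeta (fst p) * g (snd p))"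
    for g b
  proof -
    have "(e,b) \<in> fsupp (Delta b)" using e by (simp add: fsupp_def)
    then show ?thesis unfolding conv_def using fin e ze by (simp add: sum.remove)
  qed
  show "psi' = psi"
  proof
    fix b show "psi' b = psi b"
    proof (induction "sz b" arbitrary: b rule: less_induct)
      case less
      have "(\<Sum>p\<in>fsupp (Delta b) - {(e,b)}. Delta b p * zeta (fst p) * psi' (snd p))
          = (\<Sum>p\<in>fsupp (Delta b) - {(e,b)}. Delta b p * zeta (fst p) * psi (snd p))"
        by (intro sum.cong refl) (simp add: less sm)
      moreover have "conv Delta zeta psi' b = conv Delta zeta psi b" using eq by simp
      ultimately show ?case by (simp only: split) simp
    qed
  qed
qed


lemma conv_inj:
  assumes fA: "finite A" and inj: "inj_on g A" and sub: "fsupp (Delta b) \<subseteq> g ` A"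
  and cf: "\<And>x. x \<in> A \<Longrightarrow> Delta b (g x) = c x"
  shows "conv Delta phi psi b = (\<Sum>x\<in>A. c x * phi (fst (g x)) * psi (snd (g x)))"
proof -
  have "conv Delta phi psi b = (\<Sum>p\<in>g ` A. Delta b p * phi (fst p) * psi (snd p))"
    unfolding conv_def by (rule sum.mono_neutral_left) (use fA sub in \<open>auto simp: fsupp_def\<close>)
  also have "\<dots> = (\<Sum>x\<in>A. Delta b (g x) * phi (fst (g x)) * psi (snd (g x)))"
    by (subst sum.reindex[OF inj]) simp
  also have "\<dots> = (\<Sum>x\<in>A. c x * phi (fst (g x)) * psi (snd (g x)))"
    by (intro sum.cong refl) (simp add: cf)
  finally show ?thesis .
qed

lemma conv_fiber:
  fixes Delta :: "'b \<Rightarrow> ('b \<times> 'b \<Rightarrow> 'k::field)"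
  assumes fA: "finite A" and sub: "fsupp (Delta b) \<subseteq> g ` A"
  and cf: "\<And>p. p \<in> g ` A \<Longrightarrow> Delta b p = of_nat (card {x\<in>A. g x = p})"
  shows "conv Delta phi psi b = (\<Sum>x\<in>A. phi (fst (g x)) * psi (snd (g x)))"
proof -
  have "conv Delta phi psi b = (\<Sum>p\<in>g ` A. Delta b p * phi (fst p) * psi (snd p))"
    unfolding conv_def by (rule sum.mono_neutral_left) (use fA sub in \<open>auto simp: fsupp_def\<close>)
  also have "\<dots> = (\<Sum>p\<in>g ` A. \<Sum>x\<in>{x\<in>A. g x = p}. phi (fst (g x)) * psi (snd (g x)))"
  proof (intro sum.cong refl)
    fix p assume p: "p \<in> g ` A"
    have "(\<Sum>x\<in>{x\<in>A. g x = p}. phi (fst (g x)) * psi (snd (g x)))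
        = (\<Sum>x\<in>{x\<in>A. g x = p}. phi (fst p) * psi (snd p))" by (intro sum.cong) auto
    also have "\<dots> = of_nat (card {x\<in>A. g x = p}) * (phi (fst p) * psi (snd p))" by simp
    finally show "Delta b p * phi (fst p) * psi (snd p) = (\<Sum>x\<in>{x\<in>A. g x = p}. phi (fst (g x)) * psi (snd (g x)))"
      using cf[OF p] by (simp add: mult.assoc)
  qed
  also have "\<dots> = (\<Sum>x\<in>A. phi (fst (g x)) * psi (snd (g x)))"
    by (rule sum.image_gen[symmetric]) (rule fA)
  finally show ?thesis .
qed

lemma deconc_apply: "deconc w (x, y) = (if x @ y = w then 1 else 0)"
  by (simp add: deconc_def)

lemma fsupp_deconc: "fsupp (deconc w) \<subseteq> (\<lambda>k. (take k w, drop k w)) ` {..length w}"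
proof
  fix p assume "p \<in> fsupp (deconc w)"
  then obtain x y where p: "p = (x, y)" "x @ y = w"
    by (cases p) (auto simp: fsupp_def deconc_apply split: if_splits)
  then show "p \<in> (\<lambda>k. (take k w, drop k w)) ` {..length w}"
    by (intro image_eqI[of _ _ "length x"]) auto
qed

lemma conv_deconc:
  "conv deconc phi psi w = (\<Sum>k\<le>length w. phi (take k w) * psi (drop k w))"
proof -
  have inj: "inj_on (\<lambda>k. (take k w, drop k w)) {..length w}"
    by (rule inj_onI) (metis atMost_iff length_take min.absorb2 prod.inject)
  have "conv deconc phi psi w = (\<Sum>k\<in>{..length w}. 1 * phi (fst (take k w, drop k w)) * psi (snd (take k w, drop k w)))"
    by (rule conv_inj[of "{..length w}" "\<lambda>k. (take k w, drop k w)" deconc w, OF finite_atMost inj fsupp_deconc]) (simp add: deconc_apply)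
  then show ?thesis by simp
qed

lemma fin_deconc: "finite (fsupp (deconc w))"
  by (rule finite_subset[OF fsupp_deconc]) simp

lemma M_eval_1:
  "M_eval (Suc 0) (\<lambda>i. if i = 0 then 1 else 0) beta = (if length beta \<le> 1 then (1::'k::field) else 0)"
proof (cases beta)
  case Nil
  then have e: "{is. sorted_wrt (<) is \<and> length is = length beta \<and> set is \<subseteq> {..<Suc 0}} = {[]}" by auto
  show ?thesis using Nil unfolding M_eval_def e by simp
next
  case (Cons a r)
  show ?thesis
  proof (cases r)
    case Nil
    have e: "{is. sorted_wrt (<) is \<and> length is = length beta \<and> set is \<subseteq> {..<Suc 0}} = {[0]}"
      using Cons Nil by (auto simp: length_Suc_conv)
    show ?thesis using Cons Nil unfolding M_eval_def e by simp
  next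
    case (Cons b r')
    have e: "{is. sorted_wrt (<) is \<and> length is = length beta \<and> set is \<subseteq> {..<Suc 0}} = {}"
      using Cons \<open>beta = a # r\<close> by (auto simp: length_Suc_conv)
    show ?thesis using Cons \<open>beta = a # r\<close> unfolding M_eval_def e by simp
  qed
qed

lemma length_le_concat: "[] \<notin> set bs \<Longrightarrow> length bs \<le> length (concat bs)"
proof (induction bs)
  case (Cons b bs) then show ?case by (cases b) auto
qed simp

lemma finite_decomp: "finite {bs. concat bs = alpha \<and> [] \<notin> set bs}"
proof -
  let ?L = "{b. set b \<subseteq> set alpha \<and> length b \<le> length alpha}"
  have fL: "finite ?L" by (rule finite_lists_length_le) simp
  have "{bs. concat bs = alpha \<and> [] \<notin> set bs} \<subseteq> {bs. set bs \<subseteq> ?L \<and> length bs \<le> length alpha}"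
  proof (rule subsetI)
    fix bs assume "bs \<in> {bs. concat bs = alpha \<and> [] \<notin> set bs}"
    then have bs: "concat bs = alpha" "[] \<notin> set bs" by auto
    have l1: "length bs \<le> length alpha" using bs length_le_concat by metis
    have l2: "b \<in> ?L" if b: "b \<in> set bs" for b
    proof -
      have "set b \<subseteq> set alpha" using b bs(1) by auto
      moreover have "length b \<le> length alpha"
      proof -
        have "length b \<in> set (map length bs)" using b by simp
        then have "length b \<le> sum_list (map length bs)" by (rule member_le_sum_list) auto
        then show ?thesis using bs(1) length_concat[of bs] by simp
      qed
      ultimately show "b \<in> ?L" by simp
    qed
    show "bs \<in> {bs. set bs \<subseteq> ?L \<and> length bs \<le> length alpha}"
      using l1 l2 by blast
  qed
  then show ?thesis by (rule finite_subset) (rule finite_lists_length_le[OF fL])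
qed

lemma fsupp_shuffle_basis: "finite (fsupp (shuffle_basis alpha :: nat list \<Rightarrow> 'k::field))"
proof -
  have "fsupp (shuffle_basis alpha :: nat list \<Rightarrow> 'k) \<subseteq> map sum_list ` {bs. concat bs = alpha \<and> [] \<notin> set bs}"
  proof
    fix beta assume "beta \<in> fsupp (shuffle_basis alpha :: nat list \<Rightarrow> 'k)"
    then have "shuffle_basis alpha beta \<noteq> (0::'k)" by (simp add: fsupp_def)
    then have "{bs. concat bs = alpha \<and> [] \<notin> set bs \<and> map sum_list bs = beta} \<noteq> {}"
      unfolding shuffle_basis_def by (metis sum.empty)
    then show "beta \<in> map sum_list ` {bs. concat bs = alpha \<and> [] \<notin> set bs}" by blast
  qed
  then show ?thesis by (rule finite_subset) (simp add: finite_decomp)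
qed

lemma SB_nil: "shuffle_basis alpha [] = (if alpha = [] then 1 else (0::'k::field))"
proof -
  have "{bs. concat bs = alpha \<and> [] \<notin> set bs \<and> map sum_list bs = []} = (if alpha = [] then {[]} else {})"
    by auto
  then show ?thesis by (simp add: shuffle_basis_def)
qed

lemma SB_single: "shuffle_basis alpha [a] =
   (if alpha \<noteq> [] \<and> sum_list alpha = a then 1 / of_nat (fact (length alpha)) else (0::'k::field))"
proof -
  have "{bs. concat bs = alpha \<and> [] \<notin> set bs \<and> map sum_list bs = [a]}
      = (if alpha \<noteq> [] \<and> sum_list alpha = a then {[alpha]} else {})"
  proof (rule set_eqI)
    fix bs :: "nat list list"
    show "bs \<in> {bs. concat bs = alpha \<and> [] \<notin> set bs \<and> map sum_list bs = [a]}
       \<longleftrightarrow> bs \<in> (if alpha \<noteq> [] \<and> sum_list alpha = a then {[alpha]} else {})"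
    proof
      assume "bs \<in> {bs. concat bs = alpha \<and> [] \<notin> set bs \<and> map sum_list bs = [a]}"
      then have h: "concat bs = alpha" "[] \<notin> set bs" "map sum_list bs = [a]" by auto
      then have "length bs = Suc 0" by (metis length_map list.size(3) list.size(4) add_0)
      then obtain b where "bs = [b]" by (cases bs) auto
      then show "bs \<in> (if alpha \<noteq> [] \<and> sum_list alpha = a then {[alpha]} else {})"
        using h by auto
    next
      assume "bs \<in> (if alpha \<noteq> [] \<and> sum_list alpha = a then {[alpha]} else {})"
      then show "bs \<in> {bs. concat bs = alpha \<and> [] \<notin> set bs \<and> map sum_list bs = [a]}"
        by (simp split: if_splits)
    qed
  qed
  then show ?thesis by (simp add: shuffle_basis_def)
qed

lemma zeta_S_eq: "zeta_S deg w = (1 / fact (length w) :: 'k::field_char_0)"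
proof -
  let ?f = "Phi_S deg w :: nat list \<Rightarrow> 'k"
  let ?al = "map deg w"
  define b0 where "b0 = (if w = [] then [] else [sum_list ?al])"
  define c where "c = (1 / fact (length w) :: 'k)"
  have f: "?f = shuffle_basis ?al" by (simp add: Phi_S_def)
  have fb0: "?f b0 = c"
    by (simp add: f b0_def c_def SB_nil SB_single)
  have c0: "c \<noteq> 0" by (simp add: c_def)
  have key: "?f beta * M_eval (Suc 0) (\<lambda>i. if i = 0 then 1 else 0) beta = (if b0 = beta then c else 0)" for beta
  proof (cases "length beta \<le> 1")
    case True
    then consider "beta = []" | a where "beta = [a]"
      by (cases beta) auto
    then show ?thesis
      unfolding M_eval_1 by cases (auto simp: f b0_def c_def SB_nil SB_single)
  next
    case False
    then have "b0 \<noteq> beta" by (auto simp: b0_def)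
    then show ?thesis using False unfolding M_eval_1 by simp
  qed
  have "zeta_S deg w = (\<Sum>beta\<in>fsupp ?f. (if b0 = beta then c else 0))"
    unfolding zeta_S_def zeta_QSym_def qsym_eval_def by (simp add: key)
  also have "\<dots> = c"
  proof -
    have fin: "finite (fsupp ?f)" using fsupp_shuffle_basis[of ?al] by (simp add: f)
    have "b0 \<in> fsupp ?f" using fb0 c0 by (simp add: fsupp_def)
    then show ?thesis by (subst sum.delta'[OF fin]) simp
  qed
  finally show ?thesis by (simp add: c_def)
qed


lemma expo_sum:
  "(\<Sum>k\<le>n. a^k / fact k * (b^(n-k) / fact (n-k))) = (a+b)^n / (fact n :: 'k::field_char_0)"
proof -
  have "(a+b)^n / fact n = (\<Sum>k\<le>n. of_nat (n choose k) * a^k * b^(n-k) / fact n)"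
    by (simp add: binomial_ring sum_divide_distrib)
  also have "\<dots> = (\<Sum>k\<le>n. a^k / fact k * (b^(n-k) / fact (n-k)))"
  proof (intro sum.cong refl)
    fix k assume "k \<in> {..n}"
    then have k: "k \<le> n" by simp
    show "of_nat (n choose k) * a^k * b^(n-k) / fact n = a^k / fact k * (b^(n-k) / fact (n-k))"
      by (simp add: binomial_fact[OF k] field_simps)
  qed
  finally show ?thesis by simp
qed

lemma eps_word_len: "eps_word w = ((0::'k::field_char_0)^length w / fact (length w))"
  by (simp add: eps_word_def)

lemma conv_S:
  fixes a b :: "'k::field_char_0"
  shows "conv deconc (\<lambda>w. a ^ length w / fact (length w)) (\<lambda>w. b ^ length w / fact (length w)) w
       = (a + b) ^ length w / fact (length w)"
proof -
  have "conv deconc (\<lambda>w. a ^ length w / fact (length w)) (\<lambda>w. b ^ length w / fact (length w)) w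
     = (\<Sum>k\<le>length w. a^k / fact k * (b^(length w-k) / fact (length w-k)))"
    unfolding conv_deconc by (intro sum.cong refl) (simp add: min_absorb2)
  also have "\<dots> = (a + b) ^ length w / fact (length w)" by (rule expo_sum)
  finally show ?thesis .
qed

lemma word_deg_odd: "(\<forall>i\<in>set w. odd (deg i)) \<Longrightarrow> ((-1::'k::field)^(word_deg deg w)) = (-1)^length w"
  by (induction w) (auto simp: word_deg_def power_add)

lemma word_deg_even: "(\<forall>i\<in>set w. even (deg i)) \<Longrightarrow> ((-1::'k::field)^(word_deg deg w)) = 1"
  by (induction w) (auto simp: word_deg_def power_add)

lemma conv_inv_S:
  "conv_inv deconc eps_word (zeta_S deg) = (\<lambda>w. (-1::'k::field_char_0) ^ length w / fact (length w))"
proof -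
  have z: "zeta_S deg = (\<lambda>w. (1::'k) ^ length w / fact (length w))"
    by (simp add: zeta_S_eq fun_eq_iff)
  have e: "eps_word = (\<lambda>w. (0::'k)^length w / fact (length w))"
    by (simp add: eps_word_len fun_eq_iff)
  show ?thesis
  proof (rule conv_inv_eq[where e = "[]" and sz = length])
    show "finite (fsupp (deconc b))" for b by (rule fin_deconc)
    show "deconc b ([], b) = (1::'k)" for b :: "'a list" by (simp add: deconc_apply)
    show "zeta_S deg [] = (1::'k)" by (simp add: zeta_S_eq)
    show "length (snd p) < length b" if "p \<in> fsupp (deconc b :: _ \<Rightarrow> 'k)" "p \<noteq> ([], b)" for b p
    proof -
      obtain x y where p: "p = (x, y)" by (cases p)
      with that have "x @ y = b" "x \<noteq> []" by (auto simp: fsupp_def deconc_apply split: if_splits)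
      then show ?thesis using p by auto
    qed
    show "conv deconc (zeta_S deg) (\<lambda>w. (-1::'k) ^ length w / fact (length w)) = eps_word"
      unfolding z e by (rule ext) (rule trans[OF conv_S], simp)
    show "conv deconc (\<lambda>w. (-1::'k) ^ length w / fact (length w)) (zeta_S deg) = eps_word"
      unfolding z e by (rule ext) (rule trans[OF conv_S], simp)
  qed
qed

definition ug :: "'i list \<Rightarrow> nat set \<Rightarrow> 'i list \<times> 'i list" where
  "ug w I = (nths w I, nths w ({..<length w} - I))"

lemma unshuffle_apply:
  "unshuffle w p = of_nat (card {I \<in> Pow {..<length w}. ug w I = p})"
proof -
  obtain x y where p: "p = (x, y)" by (cases p)
  have "{I. I \<subseteq> {..<length w} \<and> nths w I = x \<and> nths w ({..<length w} - I) = y}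
      = {I \<in> Pow {..<length w}. ug w I = p}" by (auto simp: ug_def p)
  then show ?thesis by (simp add: unshuffle_def p)
qed

lemma fsupp_unshuffle: "fsupp (unshuffle w :: _ \<Rightarrow> 'k::field_char_0) \<subseteq> ug w ` Pow {..<length w}"
proof
  fix p assume "p \<in> fsupp (unshuffle w :: _ \<Rightarrow> 'k)"
  then have "card {I \<in> Pow {..<length w}. ug w I = p} \<noteq> 0"
    by (auto simp: fsupp_def unshuffle_apply)
  then have "{I \<in> Pow {..<length w}. ug w I = p} \<noteq> {}" by (metis card.empty)
  then show "p \<in> ug w ` Pow {..<length w}" by blast
qed

lemma fin_unshuffle: "finite (fsupp (unshuffle w :: _ \<Rightarrow> 'k::field_char_0))"
  by (rule finite_subset[OF fsupp_unshuffle]) simp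

lemma conv_unshuffle:
  "conv unshuffle phi psi w = (\<Sum>I\<in>Pow {..<length w}. phi (nths w I) * (psi (nths w ({..<length w} - I)) :: 'k::field_char_0))"
proof -
  have "conv unshuffle phi psi w = (\<Sum>I\<in>Pow {..<length w}. phi (fst (ug w I)) * psi (snd (ug w I)))"
    by (rule conv_fiber[OF _ fsupp_unshuffle]) (auto simp: unshuffle_apply)
  then show ?thesis by (simp add: ug_def)
qed

lemma length_nths_sub: "I \<subseteq> {..<length w} \<Longrightarrow> length (nths w I) = card I"
proof -
  assume "I \<subseteq> {..<length w}"
  then have "{i. i < length w \<and> i \<in> I} = I" by auto
  then show ?thesis by (simp add: length_nths)
qed

lemma unshuffle_unit: "unshuffle w ([], w) = (1::'k::field_char_0)"
proof -
  have "{I \<in> Pow {..<length w}. ug w I = ([], w)} = {{}}"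
  proof (rule set_eqI)
    fix I
    show "I \<in> {I \<in> Pow {..<length w}. ug w I = ([], w)} \<longleftrightarrow> I \<in> {{}}"
    proof
      assume "I \<in> {I \<in> Pow {..<length w}. ug w I = ([], w)}"
      then have I: "I \<subseteq> {..<length w}" "nths w I = []" by (auto simp: ug_def)
      then have "card I = 0" using length_nths_sub[OF I(1)] by simp
      moreover have "finite I" using I(1) finite_subset by blast
      ultimately show "I \<in> {{}}" by simp
    next
      assume "I \<in> {{}}"
      then show "I \<in> {I \<in> Pow {..<length w}. ug w I = ([], w)}" by (simp add: ug_def)
    qed
  qed
  then show ?thesis by (simp add: unshuffle_apply)
qed

lemma unshuffle_sm:
  assumes "p \<in> fsupp (unshuffle w :: _ \<Rightarrow> 'k::field_char_0)" "p \<noteq> ([], w)"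
  shows "length (snd p) < length w"
proof -
  obtain I where I: "I \<subseteq> {..<length w}" "p = ug w I" using fsupp_unshuffle assms(1) by blast
  have "I \<noteq> {}" using I assms(2) by (auto simp: ug_def)
  have "length (snd p) = card ({..<length w} - I)"
    using I by (simp add: ug_def length_nths_sub)
  also have "\<dots> < card {..<length w}"
    using I \<open>I \<noteq> {}\<close> by (intro psubset_card_mono) auto
  finally show ?thesis by simp
qed

lemma prod_list_nths:
  "prod_list (map f (nths w I)) = (\<Prod>j<length w. if j \<in> I then f (w ! j) else (1::'k::comm_monoid_mult))"
proof (induction w arbitrary: I)
  case Nil then show ?case by simp
next
  case (Cons x l)
  have h: "(\<Prod>i<length l. if Suc i \<in> I then f ((x # l) ! Suc i) else 1) = (\<Prod>j<length l. if Suc j \<in> I then f (l ! j) else 1)"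
    by (rule prod.cong, rule refl) (simp only: nth_Cons_Suc)
  show ?case
    by (simp add: nths_Cons Cons.IH prod.lessThan_Suc_shift h del: prod.lessThan_Suc)
qed

lemma prod_restrict_sub:
  assumes "finite A" "I \<subseteq> A" shows "(\<Prod>j\<in>A. if j \<in> I then u j else 1) = prod u (I :: nat set)"
proof -
  have "A \<inter> I = I" using assms by auto
  then show ?thesis using prod.inter_restrict[OF assms(1), of u I] by simp
qed

lemma conv_T:
  fixes u v :: "'i \<Rightarrow> 'k::field_char_0"
  shows "conv unshuffle (\<lambda>w. prod_list (map u w)) (\<lambda>w. prod_list (map v w)) w
       = (\<Prod>j<length w. u (w ! j) + v (w ! j))"
proof -
  let ?A = "{..<length w}"
  have "conv unshuffle (\<lambda>w. prod_list (map u w)) (\<lambda>w. prod_list (map v w)) w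
      = (\<Sum>I\<in>Pow ?A. (\<Prod>j\<in>I. u (w ! j)) * (\<Prod>j\<in>?A - I. v (w ! j)))"
    unfolding conv_unshuffle prod_list_nths
  proof (intro sum.cong refl)
    fix I assume "I \<in> Pow ?A"
    then have I: "I \<subseteq> ?A" by simp
    show "(\<Prod>j<length w. if j \<in> I then u (w ! j) else 1) * (\<Prod>j<length w. if j \<in> ?A - I then v (w ! j) else 1)
       = (\<Prod>j\<in>I. u (w ! j)) * (\<Prod>j\<in>?A - I. v (w ! j))"
      by (simp only: prod_restrict_sub[OF finite_lessThan I] prod_restrict_sub[OF finite_lessThan Diff_subset])
  qed
  also have "\<dots> = (\<Prod>j\<in>?A. u (w ! j) + v (w ! j))"
    by (rule prod_add[symmetric]) simp
  finally show ?thesis .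
qed

lemma prod_list_neg: "prod_list (map (\<lambda>i. - r i) w) = (-1::'k::field)^length w * prod_list (map r w)"
  by (induction w) auto

lemma conv_inv_T:
  "conv_inv unshuffle eps_word (zeta_T deg) = (\<lambda>w. prod_list (map (\<lambda>i. - (1 / of_nat (deg i))) w) :: 'k::field_char_0)"
proof -
  have z: "zeta_T deg = (\<lambda>w. prod_list (map (\<lambda>i. 1 / of_nat (deg i)) w) :: 'k)"
    by (simp add: zeta_T_def fun_eq_iff)
  have e: "(\<Prod>j<length w. (c j :: 'k) + - c j) = eps_word w" for c w
    by (simp add: eps_word_def)
  have e': "(\<Prod>j<length w. - (c j :: 'k) + c j) = eps_word w" for c w
    by (simp add: eps_word_def)
  show ?thesis
  proof (rule conv_inv_eq[where e = "[]" and sz = length])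
    show "finite (fsupp (unshuffle b :: _ \<Rightarrow> 'k))" for b by (rule fin_unshuffle)
    show "unshuffle b ([], b) = (1::'k)" for b :: "'a list" by (rule unshuffle_unit)
    show "zeta_T deg [] = (1::'k)" by (simp add: zeta_T_def)
    show "length (snd p) < length b" if "p \<in> fsupp (unshuffle b :: _ \<Rightarrow> 'k)" "p \<noteq> ([], b)" for b p
      using unshuffle_sm that by blast
    show "conv unshuffle (zeta_T deg) (\<lambda>w. prod_list (map (\<lambda>i. - (1 / of_nat (deg i))) w) :: 'k) = eps_word"
      unfolding z by (rule ext) (simp only: conv_T e)
    show "conv unshuffle (\<lambda>w. prod_list (map (\<lambda>i. - (1 / of_nat (deg i))) w) :: 'k) (zeta_T deg) = eps_word"
      unfolding z by (rule ext) (simp only: conv_T e')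
  qed
qed


lemma count_psi:
  assumes "finite S"
  shows "count (\<Sum>i\<in>S. replicate_mset (g i) i) x = (if x \<in> S then g x else 0)"
proof -
  have "count (\<Sum>i\<in>S. replicate_mset (g i) i) x = (\<Sum>i\<in>S. if x = i then g i else 0)"
    by (simp add: count_sum)
  also have "\<dots> = (if x \<in> S then g x else 0)" by (rule sum.delta'[OF assms])
  finally show ?thesis .
qed

lemma bij_sub:
  "bij_betw (\<lambda>a. restrict (count a) (set_mset m)) {a. a \<subseteq># m} (PiE (set_mset m) (\<lambda>i. {..count m i}))"
proof (rule bij_betw_byWitness[where f' = "\<lambda>g. \<Sum>i\<in>set_mset m. replicate_mset (g i) i"])
  show "\<forall>a\<in>{a. a \<subseteq># m}. (\<Sum>i\<in>set_mset m. replicate_mset (restrict (count a) (set_mset m) i) i) = a"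
  proof
    fix a assume "a \<in> {a. a \<subseteq># m}"
    then have a: "a \<subseteq># m" by simp
    show "(\<Sum>i\<in>set_mset m. replicate_mset (restrict (count a) (set_mset m) i) i) = a"
    proof (rule multiset_eqI)
      fix x
      have "x \<notin># m \<Longrightarrow> count a x = 0" using a by (metis count_eq_zero_iff mset_subset_eqD)
      then show "count (\<Sum>i\<in>set_mset m. replicate_mset (restrict (count a) (set_mset m) i) i) x = count a x"
        by (simp add: count_psi)
    qed
  qed
  show "\<forall>g\<in>PiE (set_mset m) (\<lambda>i. {..count m i}).
          restrict (count (\<Sum>i\<in>set_mset m. replicate_mset (g i) i)) (set_mset m) = g"
  proof
    fix g assume g: "g \<in> PiE (set_mset m) (\<lambda>i. {..count m i})"
    show "restrict (count (\<Sum>i\<in>set_mset m. replicate_mset (g i) i)) (set_mset m) = g"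
    proof
      fix x show "restrict (count (\<Sum>i\<in>set_mset m. replicate_mset (g i) i)) (set_mset m) x = g x"
        using PiE_arb[OF g, of x] by (simp add: count_psi)
    qed
  qed
  show "(\<lambda>a. restrict (count a) (set_mset m)) ` {a. a \<subseteq># m} \<subseteq> PiE (set_mset m) (\<lambda>i. {..count m i})"
    by (auto simp: mset_subset_eq_count)
  show "(\<lambda>g. \<Sum>i\<in>set_mset m. replicate_mset (g i) i) ` PiE (set_mset m) (\<lambda>i. {..count m i}) \<subseteq> {a. a \<subseteq># m}"
  proof
    fix a assume "a \<in> (\<lambda>g. \<Sum>i\<in>set_mset m. replicate_mset (g i) i) ` PiE (set_mset m) (\<lambda>i. {..count m i})"
    then obtain g where g: "g \<in> PiE (set_mset m) (\<lambda>i. {..count m i})" and a: "a = (\<Sum>i\<in>set_mset m. replicate_mset (g i) i)"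
      by blast
    have "count a x \<le> count m x" for x
      using g unfolding a by (auto simp: count_psi PiE_iff)
    then show "a \<in> {a. a \<subseteq># m}" by (simp add: subseteq_mset_def)
  qed
qed

lemma finite_sub: "finite {a. a \<subseteq># m}"
  using bij_betw_finite[OF bij_sub[of m]] by (simp add: finite_PiE)

lemma sym_apply: "sym_coprod m (a, b) = (if a + b = m
       then (\<Prod>i\<in>set_mset m. of_nat (count m i choose count a i)) else 0)"
  by (simp add: sym_coprod_def)

lemma fsupp_sym: "fsupp (sym_coprod m :: _ \<Rightarrow> 'k::field) \<subseteq> (\<lambda>a. (a, m - a)) ` {a. a \<subseteq># m}"
proof
  fix p assume "p \<in> fsupp (sym_coprod m :: _ \<Rightarrow> 'k)"
  moreover obtain a b where p: "p = (a, b)" by (cases p)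
  ultimately have "a + b = m" by (auto simp: fsupp_def sym_apply split: if_splits)
  then show "p \<in> (\<lambda>a. (a, m - a)) ` {a. a \<subseteq># m}" using p by auto
qed

lemma fin_sym: "finite (fsupp (sym_coprod m :: _ \<Rightarrow> 'k::field))"
  by (rule finite_subset[OF fsupp_sym]) (simp add: finite_sub)

lemma conv_sym0:
  "conv sym_coprod phi psi m = (\<Sum>a\<in>{a. a \<subseteq># m}.
      (\<Prod>i\<in>set_mset m. of_nat (count m i choose count a i)) * phi a * (psi (m - a) :: 'k::field))"
proof -
  have inj: "inj_on (\<lambda>a. (a, m - a)) {a. a \<subseteq># m}" by (rule inj_onI) simp
  have "conv sym_coprod phi psi m = (\<Sum>a\<in>{a. a \<subseteq># m}.
      (\<Prod>i\<in>set_mset m. of_nat (count m i choose count a i)) * phi (fst (a, m - a)) * (psi (snd (a, m - a)) :: 'k))"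
    by (rule conv_inj[of "{a. a \<subseteq># m}" "\<lambda>a. (a, m - a)" sym_coprod m, OF finite_sub inj fsupp_sym])
       (simp add: sym_apply)
  then show ?thesis by simp
qed

lemma prod_mset_image:
  assumes "finite T" "set_mset a \<subseteq> T"
  shows "prod_mset (image_mset f a) = (\<Prod>i\<in>T. (f i :: 'k::comm_monoid_mult) ^ count a i)"
  using assms(2)
proof (induction a)
  case empty then show ?case by simp
next
  case (add x a)
  then have xT: "x \<in> T" and aT: "set_mset a \<subseteq> T" by auto
  have "(\<Prod>i\<in>T. f i ^ count (add_mset x a) i) = (\<Prod>i\<in>T. (if x = i then f i else 1) * f i ^ count a i)"
    by (intro prod.cong refl) auto
  also have "\<dots> = (\<Prod>i\<in>T. (if x = i then f i else 1)) * (\<Prod>i\<in>T. f i ^ count a i)"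
    by (rule prod.distrib)
  also have "(\<Prod>i\<in>T. (if x = i then f i else 1)) = f x"
    using prod.delta'[OF assms(1), of x f] xT by simp
  finally show ?case using add.IH[OF aT] by simp
qed

lemma conv_Sym:
  fixes u v :: "'i \<Rightarrow> 'k::field"
  shows "conv sym_coprod (\<lambda>a. prod_mset (image_mset u a)) (\<lambda>a. prod_mset (image_mset v a)) m
       = (\<Prod>i\<in>set_mset m. (u i + v i) ^ count m i)"
proof -
  let ?S = "set_mset m"
  let ?A = "{a. a \<subseteq># m}"
  let ?B = "\<lambda>i. {..count m i}"
  define F where "F i j = of_nat (count m i choose j) * u i ^ j * v i ^ (count m i - j)" for i j
  have "conv sym_coprod (\<lambda>a. prod_mset (image_mset u a)) (\<lambda>a. prod_mset (image_mset v a)) m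
      = (\<Sum>a\<in>?A. \<Prod>i\<in>?S. F i (restrict (count a) ?S i))"
    unfolding conv_sym0
  proof (intro sum.cong refl)
    fix a assume "a \<in> ?A"
    then have a: "a \<subseteq># m" by simp
    have s1: "set_mset a \<subseteq> ?S" using a by (rule set_mset_mono)
    have s2: "set_mset (m - a) \<subseteq> ?S" by (rule set_mset_mono) simp
    have "(\<Prod>i\<in>?S. of_nat (count m i choose count a i)) * prod_mset (image_mset u a) * prod_mset (image_mset v (m - a))
        = (\<Prod>i\<in>?S. of_nat (count m i choose count a i)) * (\<Prod>i\<in>?S. u i ^ count a i) * (\<Prod>i\<in>?S. v i ^ count (m - a) i)"
      by (simp only: prod_mset_image[OF finite_set_mset s1] prod_mset_image[OF finite_set_mset s2])
    also have "\<dots> = (\<Prod>i\<in>?S. F i (restrict (count a) ?S i))"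
      by (simp add: F_def prod.distrib)
    finally show "(\<Prod>i\<in>?S. of_nat (count m i choose count a i)) * prod_mset (image_mset u a) * prod_mset (image_mset v (m - a))
        = (\<Prod>i\<in>?S. F i (restrict (count a) ?S i))" .
  qed
  also have "\<dots> = (\<Sum>g\<in>PiE ?S ?B. \<Prod>i\<in>?S. F i (g i))"
    by (rule sum.reindex_bij_betw[OF bij_sub])
  also have "\<dots> = (\<Prod>i\<in>?S. \<Sum>j\<in>?B i. F i j)"
    by (rule prod_sum_PiE[symmetric]) auto
  also have "\<dots> = (\<Prod>i\<in>?S. (u i + v i) ^ count m i)"
    by (simp add: F_def binomial_ring)
  finally show ?thesis .
qed

lemma prod_mset_neg: "prod_mset (image_mset (\<lambda>i. - r i) m) = (-1::'k::field)^size m * prod_mset (image_mset r m)"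
  by (induction m) auto

lemma mset_deg_odd: "(\<forall>i\<in>set_mset m. odd (deg i)) \<Longrightarrow> ((-1::'k::field)^(mset_deg deg m)) = (-1)^size m"
  by (induction m) (auto simp: mset_deg_def power_add)

lemma mset_deg_even: "(\<forall>i\<in>set_mset m. even (deg i)) \<Longrightarrow> ((-1::'k::field)^(mset_deg deg m)) = 1"
  by (induction m) (auto simp: mset_deg_def power_add)

lemma eps_mset_prod: "(\<Prod>i\<in>set_mset m. (0::'k::field) ^ count m i) = eps_mset m"
proof (cases "m = {#}")
  case True then show ?thesis by (simp add: eps_mset_def)
next
  case False
  then obtain x where x: "x \<in># m" by blast
  then have "(0::'k) ^ count m x = 0" by simp
  then have "(\<Prod>i\<in>set_mset m. (0::'k) ^ count m i) = 0"
    using x by (intro prod_zero) auto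
  then show ?thesis using False by (simp add: eps_mset_def)
qed

lemma conv_inv_Sym:
  "conv_inv sym_coprod eps_mset (zeta_Sym deg) = (\<lambda>m. prod_mset (image_mset (\<lambda>i. - (1 / of_nat (deg i))) m) :: 'k::field_char_0)"
proof -
  have z: "zeta_Sym deg = (\<lambda>m. prod_mset (image_mset (\<lambda>i. 1 / of_nat (deg i)) m) :: 'k)"
    by (simp add: zeta_Sym_def fun_eq_iff)
  have e: "(\<Prod>i\<in>set_mset m. ((c i :: 'k) + - c i) ^ count m i) = eps_mset m" for c m
    using eps_mset_prod[of m] by simp
  have e': "(\<Prod>i\<in>set_mset m. (- (c i :: 'k) + c i) ^ count m i) = eps_mset m" for c m
    using eps_mset_prod[of m] by simp
  show ?thesis
  proof (rule conv_inv_eq[where e = "{#}" and sz = size])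
    show "finite (fsupp (sym_coprod b :: _ \<Rightarrow> 'k))" for b by (rule fin_sym)
    show "sym_coprod b ({#}, b) = (1::'k)" for b :: "'a multiset" by (simp add: sym_apply)
    show "zeta_Sym deg {#} = (1::'k)" by (simp add: zeta_Sym_def)
    show "size (snd p) < size b" if "p \<in> fsupp (sym_coprod b :: _ \<Rightarrow> 'k)" "p \<noteq> ({#}, b)" for b p
    proof -
      obtain x y where p: "p = (x, y)" by (cases p)
      with that have "x + y = b" "x \<noteq> {#}" by (auto simp: fsupp_def sym_apply split: if_splits)
      then show ?thesis using p by (auto simp: nonempty_has_size)
    qed
    show "conv sym_coprod (zeta_Sym deg) (\<lambda>m. prod_mset (image_mset (\<lambda>i. - (1 / of_nat (deg i))) m) :: 'k) = eps_mset"
      unfolding z by (rule ext) (simp only: conv_Sym e)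
    show "conv sym_coprod (\<lambda>m. prod_mset (image_mset (\<lambda>i. - (1 / of_nat (deg i))) m) :: 'k) (zeta_Sym deg) = eps_mset"
      unfolding z by (rule ext) (simp only: conv_Sym e')
  qed
qed


lemma cl_deconc:
  assumes "\<forall>i\<in>set b. P i" "p \<in> fsupp (deconc b :: _ \<Rightarrow> 'k::field)"
  shows "(\<forall>i\<in>set (fst p). P i) \<and> (\<forall>i\<in>set (snd p). P i)"
proof -
  obtain x y where p: "p = (x, y)" by (cases p)
  with assms(2) have "x @ y = b" by (auto simp: fsupp_def deconc_apply split: if_splits)
  then show ?thesis using assms(1) p by auto
qed

lemma cl_unshuffle:
  assumes "\<forall>i\<in>set b. P i" "p \<in> fsupp (unshuffle b :: _ \<Rightarrow> 'k::field_char_0)"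
  shows "(\<forall>i\<in>set (fst p). P i) \<and> (\<forall>i\<in>set (snd p). P i)"
proof -
  obtain I where "p = ug b I" using fsupp_unshuffle assms(2) by blast
  then show ?thesis using assms(1) set_nths_subset by (fastforce simp: ug_def)
qed

lemma cl_sym:
  assumes "\<forall>i\<in>set_mset b. P i" "p \<in> fsupp (sym_coprod b :: _ \<Rightarrow> 'k::field)"
  shows "(\<forall>i\<in>set_mset (fst p). P i) \<and> (\<forall>i\<in>set_mset (snd p). P i)"
proof -
  obtain x y where p: "p = (x, y)" by (cases p)
  with assms(2) have "x + y = b" by (auto simp: fsupp_def sym_apply split: if_splits)
  then show ?thesis using assms(1) p by auto
qed

lemma negsq: "(-1::'k::field)^n * (-1)^n = 1"
  by (simp add: power_mult_distrib[symmetric])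

theorem mainTheorem10:
  fixes deg :: "'i \<Rightarrow> nat"
  assumes pos: "\<forall>i. 0 < deg i"
  shows
    "(O_words deg :: ('i list \<Rightarrow> 'k::field_char_0) set)
        \<subseteq> S_minus deconc eps_word (word_deg deg) (zeta_S deg)
   \<and> (E_words deg :: ('i list \<Rightarrow> 'k) set) \<subseteq> S_plus deconc (word_deg deg) (zeta_S deg)
   \<and> (O_words deg :: ('i list \<Rightarrow> 'k) set)
        \<subseteq> S_minus unshuffle eps_word (word_deg deg) (zeta_T deg)
   \<and> (E_words deg :: ('i list \<Rightarrow> 'k) set) \<subseteq> S_plus unshuffle (word_deg deg) (zeta_T deg)
   \<and> (O_msets deg :: ('i multiset \<Rightarrow> 'k) set)
        \<subseteq> S_minus sym_coprod eps_mset (mset_deg deg) (zeta_Sym deg)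
   \<and> (E_msets deg :: ('i multiset \<Rightarrow> 'k) set) \<subseteq> S_plus sym_coprod (mset_deg deg) (zeta_Sym deg)"
proof -
  let ?Bo = "{w. \<forall>i\<in>set w. odd (deg i)}"
  let ?Be = "{w. \<forall>i\<in>set w. even (deg i)}"
  let ?Mo = "{m. \<forall>i\<in>set_mset m. odd (deg i)}"
  let ?Me = "{m. \<forall>i\<in>set_mset m. even (deg i)}"
  have Ow: "(O_words deg :: ('i list \<Rightarrow> 'k) set) = {f \<in> vecs. fsupp f \<subseteq> ?Bo}"
    by (auto simp: O_words_def)
  have Ew: "(E_words deg :: ('i list \<Rightarrow> 'k) set) = {f \<in> vecs. fsupp f \<subseteq> ?Be}"
    by (auto simp: E_words_def)
  have Om: "(O_msets deg :: ('i multiset \<Rightarrow> 'k) set) = {f \<in> vecs. fsupp f \<subseteq> ?Mo}"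
    by (auto simp: O_msets_def)
  have Em: "(E_msets deg :: ('i multiset \<Rightarrow> 'k) set) = {f \<in> vecs. fsupp f \<subseteq> ?Me}"
    by (auto simp: E_msets_def)
  have sc1: "subcoalgebra (deconc :: _ \<Rightarrow> _ \<Rightarrow> 'k) {f \<in> vecs. fsupp f \<subseteq> {w. \<forall>i\<in>set w. P i}}" for P :: "'i \<Rightarrow> bool"
    by (rule basis_subcoalg) (auto simp: fin_deconc dest: cl_deconc)
  have sc2: "subcoalgebra (unshuffle :: _ \<Rightarrow> _ \<Rightarrow> 'k) {f \<in> vecs. fsupp f \<subseteq> {w. \<forall>i\<in>set w. P i}}" for P :: "'i \<Rightarrow> bool"
    by (rule basis_subcoalg) (auto simp: fin_unshuffle dest: cl_unshuffle)
  have sc3: "subcoalgebra (sym_coprod :: _ \<Rightarrow> _ \<Rightarrow> 'k) {f \<in> vecs. fsupp f \<subseteq> {m. \<forall>i\<in>set_mset m. P i}}" for P :: "'i \<Rightarrow> bool"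
    by (rule basis_subcoalg) (auto simp: fin_sym dest: cl_sym)
  have p1: "(O_words deg :: ('i list \<Rightarrow> 'k) set) \<subseteq> S_minus deconc eps_word (word_deg deg) (zeta_S deg)"
    unfolding Ow S_minus_def
  proof (rule in_largest[OF sc1 in_ker])
    fix b assume "b \<in> ?Bo"
    then have "((-1::'k)^(word_deg deg b)) = (-1)^length b" by (simp add: word_deg_odd)
    then show "bar (word_deg deg) (conv_inv deconc eps_word (zeta_S deg)) b - zeta_S deg b = (0::'k)"
      by (simp add: bar_def conv_inv_S zeta_S_eq negsq mult.assoc[symmetric])
  qed
  have p2: "(E_words deg :: ('i list \<Rightarrow> 'k) set) \<subseteq> S_plus deconc (word_deg deg) (zeta_S deg)"
    unfolding Ew S_plus_def
  proof (rule in_largest[OF sc1 in_ker])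
    fix b assume "b \<in> ?Be"
    then have "((-1::'k)^(word_deg deg b)) = 1" by (simp add: word_deg_even)
    then show "bar (word_deg deg) (zeta_S deg) b - zeta_S deg b = (0::'k)"
      by (simp add: bar_def)
  qed
  have p3: "(O_words deg :: ('i list \<Rightarrow> 'k) set) \<subseteq> S_minus unshuffle eps_word (word_deg deg) (zeta_T deg)"
    unfolding Ow S_minus_def
  proof (rule in_largest[OF sc2 in_ker])
    fix b assume "b \<in> ?Bo"
    then have "((-1::'k)^(word_deg deg b)) = (-1)^length b" by (simp add: word_deg_odd)
    then show "bar (word_deg deg) (conv_inv unshuffle eps_word (zeta_T deg)) b - zeta_T deg b = (0::'k)"
      by (simp add: bar_def conv_inv_T zeta_T_def prod_list_neg negsq mult.assoc[symmetric])
  qed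
  have p4: "(E_words deg :: ('i list \<Rightarrow> 'k) set) \<subseteq> S_plus unshuffle (word_deg deg) (zeta_T deg)"
    unfolding Ew S_plus_def
  proof (rule in_largest[OF sc2 in_ker])
    fix b assume "b \<in> ?Be"
    then have "((-1::'k)^(word_deg deg b)) = 1" by (simp add: word_deg_even)
    then show "bar (word_deg deg) (zeta_T deg) b - zeta_T deg b = (0::'k)"
      by (simp add: bar_def)
  qed
  have p5: "(O_msets deg :: ('i multiset \<Rightarrow> 'k) set) \<subseteq> S_minus sym_coprod eps_mset (mset_deg deg) (zeta_Sym deg)"
    unfolding Om S_minus_def
  proof (rule in_largest[OF sc3 in_ker])
    fix b assume "b \<in> ?Mo"
    then have "((-1::'k)^(mset_deg deg b)) = (-1)^size b" by (simp add: mset_deg_odd)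
    then show "bar (mset_deg deg) (conv_inv sym_coprod eps_mset (zeta_Sym deg)) b - zeta_Sym deg b = (0::'k)"
      by (simp add: bar_def conv_inv_Sym zeta_Sym_def prod_mset_neg negsq mult.assoc[symmetric])
  qed
  have p6: "(E_msets deg :: ('i multiset \<Rightarrow> 'k) set) \<subseteq> S_plus sym_coprod (mset_deg deg) (zeta_Sym deg)"
    unfolding Em S_plus_def
  proof (rule in_largest[OF sc3 in_ker])
    fix b assume "b \<in> ?Me"
    then have "((-1::'k)^(mset_deg deg b)) = 1" by (simp add: mset_deg_even)
    then show "bar (mset_deg deg) (zeta_Sym deg) b - zeta_Sym deg b = (0::'k)"
      by (simp add: bar_def)
  qed
  show ?thesis using p1 p2 p3 p4 p5 p6 by blast
qed

end
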